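(* Let $d,N\in\mathbb{N}$, $a_1,\dots,a_N\in\mathbb{R}^d$ and $b_1,\dots,b_N,c_1,\dots,c_N,\beta\in\mathbb{R}$ be fixed, and define $\Phi(x)=\sum_{i=1}^N c_i\,\mathrm{ReLU}(\langle a_i,x\rangle+b_i)+\beta$ and $\widetilde{\Phi}(x)=\sum_{i=1}^N c_i(\langle a_i,x\rangle+b_i)+\beta$ for $x\in\mathbb{R}^d$. Then $\mathrm{Lip}(\Phi)\ge\frac12\mathrm{Lip}(\widetilde{\Phi})$.
   Context: $\mathrm{ReLU}(t)=\max\{0,t\}$; $\mathrm{Lip}(f)=\sup_{x\neq y}|f(x)-f(y)|/\|x-y\|_2$. *)

theory Defs
  imports "HOL-Analysis.Analysis"
begin

definition ReLU :: "real \<Rightarrow> real" where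
  "ReLU t = max 0 t"

definition Lip :: "('a::real_normed_vector \<Rightarrow> real) \<Rightarrow> ereal" where
  "Lip f = (SUP p \<in> {p. fst p \<noteq> snd p}. ereal (\<bar>f (fst p) - f (snd p)\<bar> / norm (fst p - snd p)))"

end

theory Submission
  imports Defs
begin

lemma relu_bound: "\<bar>ReLU (s + b) - ReLU (- s + b) - s\<bar> \<le> 3 * \<bar>b\<bar>"
  unfolding ReLU_def by (auto simp: max_def)

lemma Lip_ge:
  assumes "x \<noteq> y"
  shows "ereal (\<bar>f x - f y\<bar> / norm (x - y)) \<le> Lip f"
  unfolding Lip_def
  by (rule SUP_upper2[where i="(x,y)"]) (use assms in auto)

theorem proposition4p8:
  fixes N :: nat
    and a :: "nat \<Rightarrow> 'd::euclidean_space"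
    and b c :: "nat \<Rightarrow> real"
    and \<beta> :: real
  shows "Lip (\<lambda>x. (\<Sum>i<N. c i * ReLU (inner (a i) x + b i)) + \<beta>)
           \<ge> ereal (1/2) * Lip (\<lambda>x. (\<Sum>i<N. c i * (inner (a i) x + b i)) + \<beta>)"
proof -
  define F where "F = (\<lambda>x. (\<Sum>i<N. c i * ReLU (inner (a i) x + b i)) + \<beta>)"
  define G where "G = (\<lambda>x::'d. (\<Sum>i<N. c i * (inner (a i) x + b i)) + \<beta>)"
  define w where "w = (\<Sum>i<N. c i *\<^sub>R a i)"
  define K where "K = (\<Sum>i<N. \<bar>c i\<bar> * (3 * \<bar>b i\<bar>))"
  have K0: "K \<ge> 0" unfolding K_def by (intro sum_nonneg) auto
  have Gdiff: "G x - G y = inner w (x - y)" for x y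
    unfolding G_def w_def
    by (simp add: inner_sum_left inner_diff_right sum_subtractf[symmetric] algebra_simps)
  have LG: "Lip G \<le> ereal (norm w)"
    unfolding Lip_def
  proof (rule SUP_least)
    fix p :: "'d \<times> 'd" assume "p \<in> {p. fst p \<noteq> snd p}"
    hence np: "norm (fst p - snd p) > 0" by auto
    have "\<bar>G (fst p) - G (snd p)\<bar> \<le> norm w * norm (fst p - snd p)"
      unfolding Gdiff using Cauchy_Schwarz_ineq2 by blast
    hence "\<bar>G (fst p) - G (snd p)\<bar> / norm (fst p - snd p) \<le> norm w"
      using np by (simp add: divide_le_eq)
    thus "ereal (\<bar>G (fst p) - G (snd p)\<bar> / norm (fst p - snd p)) \<le> ereal (norm w)" by simp
  qed
  have Fbound: "\<bar>F x - F (-x) - inner w x\<bar> \<le> K" for x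
  proof -
    have "F x - F (-x) - inner w x =
      (\<Sum>i<N. c i * (ReLU (inner (a i) x + b i) - ReLU (- inner (a i) x + b i) - inner (a i) x))"
      unfolding F_def w_def
      by (simp add: inner_sum_left sum_subtractf[symmetric] algebra_simps)
    also have "\<bar>\<dots>\<bar> \<le> (\<Sum>i<N. \<bar>c i * (ReLU (inner (a i) x + b i) - ReLU (- inner (a i) x + b i) - inner (a i) x)\<bar>)"
      by (rule sum_abs)
    also have "\<dots> \<le> K" unfolding K_def
      by (intro sum_mono) (metis abs_mult abs_ge_zero mult_left_mono relu_bound)
    finally show ?thesis .
  qed
  obtain e :: 'd where e: "e \<noteq> 0"
    using nonzero_Basis ex_in_conv[of "Basis :: 'd set"] by (metis nonempty_Basis)
  have L0: "ereal 0 \<le> Lip F"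
    by (rule order_trans[OF _ Lip_ge[OF e]]) simp
  have LF: "ereal (norm w / 2) \<le> Lip F"
  proof (cases "w = 0")
    case True thus ?thesis using L0 by simp
  next
    case False
    hence nw: "norm w > 0" by simp
    show ?thesis
    proof (rule dense_le)
      fix y assume y: "y < ereal (norm w / 2)"
      show "y \<le> Lip F"
      proof (cases y)
        case (real r)
        hence r: "r < norm w / 2" using y by simp
        define t where "t = (K + 1) / (norm w * (norm w - 2 * r))"
        have d: "norm w * (norm w - 2 * r) > 0" using r nw by simp
        have t0: "t > 0" unfolding t_def using d K0 by simp
        have tk: "t * (norm w * (norm w - 2 * r)) = K + 1" unfolding t_def using d by (metis less_irrefl nonzero_divide_eq_eq)
        have n2: "norm (t *\<^sub>R w - - (t *\<^sub>R w)) = 2 * t * norm w"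
        proof -
          have "t *\<^sub>R w - - (t *\<^sub>R w) = (2 * t) *\<^sub>R w" by (simp add: scaleR_left_distrib[symmetric])
          thus ?thesis using t0 by simp
        qed
        have x0: "t *\<^sub>R w \<noteq> - (t *\<^sub>R w)"
        proof
          assume "t *\<^sub>R w = - (t *\<^sub>R w)"
          hence "norm (t *\<^sub>R w - - (t *\<^sub>R w)) = 0" by simp
          thus False using n2 t0 nw by simp
        qed
        have iw: "inner w (t *\<^sub>R w) = t * norm w ^ 2" by (simp add: power2_norm_eq_inner)
        have "\<bar>F (t *\<^sub>R w) - F (- (t *\<^sub>R w))\<bar> \<ge> t * norm w ^ 2 - K"
          using Fbound[of "t *\<^sub>R w"] iw by linarith
        moreover have "t * norm w ^ 2 - K \<ge> r * (2 * t * norm w)"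
          using tk by (simp add: power2_eq_square algebra_simps)
        ultimately have "r * (2 * t * norm w) \<le> \<bar>F (t *\<^sub>R w) - F (- (t *\<^sub>R w))\<bar>" by linarith
        hence "r \<le> \<bar>F (t *\<^sub>R w) - F (- (t *\<^sub>R w))\<bar> / norm (t *\<^sub>R w - - (t *\<^sub>R w))"
          unfolding n2 using t0 nw by (simp add: le_divide_eq)
        hence "ereal r \<le> ereal (\<bar>F (t *\<^sub>R w) - F (- (t *\<^sub>R w))\<bar> / norm (t *\<^sub>R w - - (t *\<^sub>R w)))"
          by simp
        thus ?thesis using real Lip_ge[OF x0, of F] by (metis order_trans)
      next
        case PInf thus ?thesis using y by simp
      next
        case MInf thus ?thesis by simp
      qed
    qed
  qed
  have "ereal (1/2) * Lip G \<le> ereal (1/2) * ereal (norm w)"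
    by (rule ereal_mult_left_mono[OF LG]) simp
  also have "\<dots> = ereal (norm w / 2)" by simp
  also have "\<dots> \<le> Lip F" by (rule LF)
  finally show ?thesis unfolding F_def G_def .
qed

end
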